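(* Let $V$ be any Gödel set, let $Q\bar x\,A(\bar x)$ be a prenex sentence with quantifier prefix $Q\bar x$ and quantifier-free matrix $A$, and let $\Gamma$ be a set of sentences not containing the Skolem symbols introduced below. Then $\Gamma\Vdash_V Q\bar x\,A(\bar x)$ if and only if $\Gamma\Vdash_V (Q\bar x\,A(\bar x))^S$.
   Context: A Gödel set is a closed set $V\subseteq[0,1]$ with $0,1\in V$. A $V$-interpretation $\mathcal I$ consists of a nonempty domain $U$, interpretations of constants and function symbols as usual, and for each $k$-ary predicate a function $U^k\to V$; with constants for elements of $U$ added, $\mathcal I(\bot)=0$, $\wedge,\vee$ are $\min,\max$, $\mathcal I(A\supset B)=1$ if $\mathcal I(A)\le\mathcal I(B)$ and $=\mathcal I(B)$ otherwise, $\mathcal I(\forall xA(x))=\inf_{u\in U}\mathcal I(A(u))$, $\mathcal I(\exists xA(x))=\sup_{u\in U}\mathcal I(A(u))$. For a set $\Gamma$ of sentences, $\Gamma\Vdash_V A$ means: every $V$-interpretation that gives value $1$ to all members of $\Gamma$ gives value $1$ to $A$. The validity Skolemization $(Q\bar x A)^S$ of a prenex sentence is obtained by deleting each universal quantifier $\forall y$ from the prefix and replacing $y$ in the matrix by $f(\bar z)$, where $f$ is a new function symbol (distinct for each such quantifier) and $\bar z$ is the list of existentially quantified variables preceding $\forall y$ in the prefix ($f$ is a new constant if $\bar z$ is empty). The result is purely existential. *)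

theory Defs
  imports Complex_Main
begin

datatype 'f trm = Var nat | Fn 'f "'f trm list"

datatype ('f, 'p) fm =
    Bot
  | Pred 'p "'f trm list"
  | And "('f, 'p) fm" "('f, 'p) fm"
  | Or "('f, 'p) fm" "('f, 'p) fm"
  | Imp "('f, 'p) fm" "('f, 'p) fm"
  | All nat "('f, 'p) fm"
  | Ex nat "('f, 'p) fm"

fun fvt :: "'f trm \<Rightarrow> nat set" where
  "fvt (Var x) = {x}"
| "fvt (Fn f ts) = (\<Union>t\<in>set ts. fvt t)"

fun fv :: "('f, 'p) fm \<Rightarrow> nat set" where
  "fv Bot = {}"
| "fv (Pred p ts) = (\<Union>t\<in>set ts. fvt t)"
| "fv (And A B) = fv A \<union> fv B"
| "fv (Or A B) = fv A \<union> fv B"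
| "fv (Imp A B) = fv A \<union> fv B"
| "fv (All x A) = fv A - {x}"
| "fv (Ex x A) = fv A - {x}"

definition sentence :: "('f, 'p) fm \<Rightarrow> bool" where
  "sentence A \<longleftrightarrow> fv A = {}"

fun fsymst :: "'f trm \<Rightarrow> 'f set" where
  "fsymst (Var x) = {}"
| "fsymst (Fn f ts) = insert f (\<Union>t\<in>set ts. fsymst t)"

fun fsyms :: "('f, 'p) fm \<Rightarrow> 'f set" where
  "fsyms Bot = {}"
| "fsyms (Pred p ts) = (\<Union>t\<in>set ts. fsymst t)"
| "fsyms (And A B) = fsyms A \<union> fsyms B"
| "fsyms (Or A B) = fsyms A \<union> fsyms B"
| "fsyms (Imp A B) = fsyms A \<union> fsyms B"
| "fsyms (All x A) = fsyms A"
| "fsyms (Ex x A) = fsyms A"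

fun qfree :: "('f, 'p) fm \<Rightarrow> bool" where
  "qfree Bot = True"
| "qfree (Pred p ts) = True"
| "qfree (And A B) = (qfree A \<and> qfree B)"
| "qfree (Or A B) = (qfree A \<and> qfree B)"
| "qfree (Imp A B) = (qfree A \<and> qfree B)"
| "qfree (All x A) = False"
| "qfree (Ex x A) = False"

datatype quant = QAll | QEx

fun qapp :: "quant \<times> nat \<Rightarrow> ('f, 'p) fm \<Rightarrow> ('f, 'p) fm" where
  "qapp (QAll, x) B = All x B"
| "qapp (QEx, x) B = Ex x B"

definition prenex :: "(quant \<times> nat) list \<Rightarrow> ('f, 'p) fm \<Rightarrow> ('f, 'p) fm" where
  "prenex qs A = foldr qapp qs A"

fun substt :: "(nat \<Rightarrow> 'f trm) \<Rightarrow> 'f trm \<Rightarrow> 'f trm" where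
  "substt \<sigma> (Var x) = \<sigma> x"
| "substt \<sigma> (Fn f ts) = Fn f (map (substt \<sigma>) ts)"

text \<open>Substitution; only applied to quantifier-free matrices.\<close>
fun substf :: "(nat \<Rightarrow> 'f trm) \<Rightarrow> ('f, 'p) fm \<Rightarrow> ('f, 'p) fm" where
  "substf \<sigma> Bot = Bot"
| "substf \<sigma> (Pred p ts) = Pred p (map (substt \<sigma>) ts)"
| "substf \<sigma> (And A B) = And (substf \<sigma> A) (substf \<sigma> B)"
| "substf \<sigma> (Or A B) = Or (substf \<sigma> A) (substf \<sigma> B)"
| "substf \<sigma> (Imp A B) = Imp (substf \<sigma> A) (substf \<sigma> B)"
| "substf \<sigma> (All x A) = All x (substf (\<sigma>(x := Var x)) A)"
| "substf \<sigma> (Ex x A) = Ex x (substf (\<sigma>(x := Var x)) A)"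

text \<open>skol sk i zs \<sigma> qs A: i = position in the prefix, zs = existential variables
  seen so far (in order), \<sigma> = substitution accumulated for deleted universal variables.\<close>
fun skol :: "(nat \<Rightarrow> 'f) \<Rightarrow> nat \<Rightarrow> nat list \<Rightarrow> (nat \<Rightarrow> 'f trm) \<Rightarrow> (quant \<times> nat) list
    \<Rightarrow> ('f, 'p) fm \<Rightarrow> ('f, 'p) fm" where
  "skol sk i zs \<sigma> [] A = substf \<sigma> A"
| "skol sk i zs \<sigma> ((QEx, x) # qs) A = Ex x (skol sk (Suc i) (zs @ [x]) \<sigma> qs A)"
| "skol sk i zs \<sigma> ((QAll, y) # qs) A =
     skol sk (Suc i) zs (\<sigma>(y := Fn (sk i) (map Var zs))) qs A"

definition skolemize :: "(nat \<Rightarrow> 'f) \<Rightarrow> (quant \<times> nat) list \<Rightarrow> ('f, 'p) fm \<Rightarrow> ('f, 'p) fm" where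
  "skolemize sk qs A = skol sk 0 [] Var qs A"

definition univ_pos :: "(quant \<times> nat) list \<Rightarrow> nat set" where
  "univ_pos qs = {i. i < length qs \<and> fst (qs ! i) = QAll}"

definition skolem_syms :: "(nat \<Rightarrow> 'f) \<Rightarrow> (quant \<times> nat) list \<Rightarrow> 'f set" where
  "skolem_syms sk qs = sk ` univ_pos qs"

definition goedel_set :: "real set \<Rightarrow> bool" where
  "goedel_set V \<longleftrightarrow> closed V \<and> V \<subseteq> {0..1} \<and> 0 \<in> V \<and> 1 \<in> V"

record ('u, 'f, 'p) intp =
  dom :: "'u set"
  fint :: "'f \<Rightarrow> 'u list \<Rightarrow> 'u"
  pint :: "'p \<Rightarrow> 'u list \<Rightarrow> real"

definition is_Vinterp :: "real set \<Rightarrow> ('u, 'f, 'p) intp \<Rightarrow> bool" where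
  "is_Vinterp V I \<longleftrightarrow> dom I \<noteq> {}
     \<and> (\<forall>f us. set us \<subseteq> dom I \<longrightarrow> fint I f us \<in> dom I)
     \<and> (\<forall>p us. set us \<subseteq> dom I \<longrightarrow> pint I p us \<in> V)"

fun evalt :: "('u, 'f, 'p) intp \<Rightarrow> (nat \<Rightarrow> 'u) \<Rightarrow> 'f trm \<Rightarrow> 'u" where
  "evalt I e (Var x) = e x"
| "evalt I e (Fn f ts) = fint I f (map (evalt I e) ts)"

fun evalf :: "('u, 'f, 'p) intp \<Rightarrow> (nat \<Rightarrow> 'u) \<Rightarrow> ('f, 'p) fm \<Rightarrow> real" where
  "evalf I e Bot = 0"
| "evalf I e (Pred p ts) = pint I p (map (evalt I e) ts)"
| "evalf I e (And A B) = min (evalf I e A) (evalf I e B)"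
| "evalf I e (Or A B) = max (evalf I e A) (evalf I e B)"
| "evalf I e (Imp A B) = (if evalf I e A \<le> evalf I e B then 1 else evalf I e B)"
| "evalf I e (All x A) = (INF u\<in>dom I. evalf I (e(x := u)) A)"
| "evalf I e (Ex x A) = (SUP u\<in>dom I. evalf I (e(x := u)) A)"

definition holds :: "('u, 'f, 'p) intp \<Rightarrow> ('f, 'p) fm \<Rightarrow> bool" where
  "holds I A \<longleftrightarrow> (\<forall>e. range e \<subseteq> dom I \<longrightarrow> evalf I e A = 1)"

text \<open>Gamma entails A over V, for interpretations whose domain lives in type 'u.\<close>
definition entails :: "'u itself \<Rightarrow> real set \<Rightarrow> ('f, 'p) fm set \<Rightarrow> ('f, 'p) fm \<Rightarrow> bool" where
  "entails _ V \<Gamma> A \<longleftrightarrow>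
     (\<forall>I :: ('u, 'f, 'p) intp. is_Vinterp V I \<and> (\<forall>B\<in>\<Gamma>. holds I B) \<longrightarrow> holds I A)"

end

theory Submission
  imports Defs
begin

lemma evalt_dom:
  assumes "is_Vinterp V I" "range e \<subseteq> dom I"
  shows "evalt I e t \<in> dom I"
proof (induction t)
  case (Var x) then show ?case using assms(2) by auto
next
  case (Fn f ts)
  have "set (map (evalt I e) ts) \<subseteq> dom I" using Fn by auto
  then show ?case using assms(1) unfolding is_Vinterp_def by simp
qed

lemma range_upd: "range e \<subseteq> D \<Longrightarrow> u \<in> D \<Longrightarrow> range (e(x:=u)) \<subseteq> D"
  by auto

lemma evalf_bounds:
  assumes "is_Vinterp V I" "V \<subseteq> {0..1}"
  shows "range e \<subseteq> dom I \<Longrightarrow> 0 \<le> evalf I e F \<and> evalf I e F \<le> 1"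
proof (induction F arbitrary: e)
  case Bot then show ?case by simp
next
  case (Pred p ts)
  have "set (map (evalt I e) ts) \<subseteq> dom I" using evalt_dom[OF assms(1) Pred] by auto
  then have "pint I p (map (evalt I e) ts) \<in> V" using assms(1) unfolding is_Vinterp_def by blast
  then show ?case using assms(2) by auto
next
  case (And F1 F2) then show ?case by (simp add: min_def)
next
  case (Or F1 F2) then show ?case by (simp add: max_def)
next
  case (Imp F1 F2) then show ?case by simp
next
  case (All x F)
  have ne: "dom I \<noteq> {}" using assms(1) unfolding is_Vinterp_def by simp
  have b: "\<And>u. u \<in> dom I \<Longrightarrow> 0 \<le> evalf I (e(x:=u)) F \<and> evalf I (e(x:=u)) F \<le> 1"
    using All range_upd by metis
  obtain u0 where u0: "u0 \<in> dom I" using ne by auto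
  have "0 \<le> (INF u\<in>dom I. evalf I (e(x:=u)) F)"
    using b ne by (intro cINF_greatest) auto
  moreover have "(INF u\<in>dom I. evalf I (e(x:=u)) F) \<le> 1"
    using b u0 by (intro cINF_lower2[OF bdd_belowI2[where m=0]]) auto
  ultimately show ?case by simp
next
  case (Ex x F)
  have ne: "dom I \<noteq> {}" using assms(1) unfolding is_Vinterp_def by simp
  have b: "\<And>u. u \<in> dom I \<Longrightarrow> 0 \<le> evalf I (e(x:=u)) F \<and> evalf I (e(x:=u)) F \<le> 1"
    using Ex range_upd by metis
  obtain u0 where u0: "u0 \<in> dom I" using ne by auto
  have "(SUP u\<in>dom I. evalf I (e(x:=u)) F) \<le> 1"
    using b ne by (intro cSUP_least) auto
  moreover have "0 \<le> (SUP u\<in>dom I. evalf I (e(x:=u)) F)"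
    using b u0 by (intro cSUP_upper2[OF bdd_aboveI2[where M=1]]) auto
  ultimately show ?case by simp
qed

lemma evalt_subst: "evalt I e (substt \<sigma> t) = evalt I (\<lambda>v. evalt I e (\<sigma> v)) t"
  by (induction t) (auto cong: map_cong)

lemma evalf_subst: "qfree A \<Longrightarrow> evalf I e (substf \<sigma> A) = evalf I (\<lambda>v. evalt I e (\<sigma> v)) A"
  by (induction A) (auto simp: evalt_subst cong: map_cong)

lemma evalt_cong_fv: "(\<forall>v\<in>fvt t. e v = e' v) \<Longrightarrow> evalt I e t = evalt I e' t"
  by (induction t) (auto cong: map_cong)

lemma evalt_agree:
  assumes "is_Vinterp V I" "range e \<subseteq> dom I"
  shows "(\<forall>f\<in>fsymst t. \<forall>us. set us \<subseteq> dom I \<longrightarrow> fint I' f us = fint I f us) \<Longrightarrow> evalt I' e t = evalt I e t"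
proof (induction t)
  case (Var x) then show ?case by simp
next
  case (Fn f ts)
  have m: "map (evalt I' e) ts = map (evalt I e) ts" using Fn by auto
  have "set (map (evalt I e) ts) \<subseteq> dom I" using evalt_dom[OF assms] by auto
  then show ?case using Fn.prems by (simp only: evalt.simps m) simp
qed

lemma evalf_agree:
  assumes "is_Vinterp V I" "dom I' = dom I" "pint I' = pint I"
  shows "range e \<subseteq> dom I \<Longrightarrow> (\<forall>f\<in>fsyms F. \<forall>us. set us \<subseteq> dom I \<longrightarrow> fint I' f us = fint I f us) \<Longrightarrow> evalf I' e F = evalf I e F"
proof (induction F arbitrary: e)
  case (Pred p ts)
  have "\<And>t. t \<in> set ts \<Longrightarrow> evalt I' e t = evalt I e t"
    using Pred.prems(2) by (intro evalt_agree[OF assms(1) Pred(1)]) auto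
  then have m: "map (evalt I' e) ts = map (evalt I e) ts" by auto
  show ?case by (simp only: evalf.simps assms(3) m)
next
  case (All x F)
  have "\<And>u. u \<in> dom I \<Longrightarrow> evalf I' (e(x:=u)) F = evalf I (e(x:=u)) F"
    using All range_upd by (metis fsyms.simps(6))
  then show ?case using assms(2) by simp
next
  case (Ex x F)
  have "\<And>u. u \<in> dom I \<Longrightarrow> evalf I' (e(x:=u)) F = evalf I (e(x:=u)) F"
    using Ex range_upd by (metis fsyms.simps(7))
  then show ?case using assms(2) by simp
qed auto

lemma L1:
  assumes I: "is_Vinterp V I" and V: "V \<subseteq> {0..1}" and qf: "qfree A"
  shows "distinct (map snd qs) \<Longrightarrow> (\<forall>v\<in>snd ` set qs. \<sigma> v = Var v)
   \<Longrightarrow> (\<forall>v. v \<notin> snd ` set qs \<longrightarrow> evalt I e2 (\<sigma> v) = e1 v \<and> fvt (\<sigma> v) \<inter> snd ` set qs = {})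
   \<Longrightarrow> set zs \<inter> snd ` set qs = {} \<Longrightarrow> range e1 \<subseteq> dom I \<Longrightarrow> range e2 \<subseteq> dom I
   \<Longrightarrow> evalf I e1 (foldr qapp qs A) \<le> evalf I e2 (skol sk i zs \<sigma> qs A)"
proof (induction qs arbitrary: i zs \<sigma> e1 e2)
  case Nil
  have "(\<lambda>v. evalt I e2 (\<sigma> v)) = e1" using Nil by auto
  then show ?case using evalf_subst[OF qf, of I e2 \<sigma>] by simp
next
  case (Cons q qs)
  obtain k x where q: "q = (k, x)" by fastforce
  have ne: "dom I \<noteq> {}" using I unfolding is_Vinterp_def by simp
  show ?case
  proof (cases k)
    case QEx
    have step: "evalf I (e1(x:=u)) (foldr qapp qs A) \<le> evalf I (e2(x:=u)) (skol sk (Suc i) (zs @ [x]) \<sigma> qs A)"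
      if u: "u \<in> dom I" for u
    proof (rule Cons.IH)
      show "distinct (map snd qs)" using Cons.prems(1) by simp
      show "\<forall>v\<in>snd ` set qs. \<sigma> v = Var v" using Cons.prems(2) by simp
      show "\<forall>v. v \<notin> snd ` set qs \<longrightarrow> evalt I (e2(x := u)) (\<sigma> v) = (e1(x := u)) v \<and> fvt (\<sigma> v) \<inter> snd ` set qs = {}"
      proof (intro allI impI)
        fix v assume v: "v \<notin> snd ` set qs"
        show "evalt I (e2(x := u)) (\<sigma> v) = (e1(x := u)) v \<and> fvt (\<sigma> v) \<inter> snd ` set qs = {}"
        proof (cases "v = x")
          case True
          then show ?thesis using Cons.prems(1,2) q by auto
        next
          case False
          then have "v \<notin> snd ` set (q # qs)" using v q by auto
          then have h: "evalt I e2 (\<sigma> v) = e1 v" "fvt (\<sigma> v) \<inter> snd ` set (q#qs) = {}"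
            using Cons.prems(3) by auto
          have "evalt I (e2(x := u)) (\<sigma> v) = evalt I e2 (\<sigma> v)"
            using h(2) q by (intro evalt_cong_fv) auto
          then show ?thesis using h False by auto
        qed
      qed
      show "set (zs @ [x]) \<inter> snd ` set qs = {}" using Cons.prems(1,4) q by auto
      show "range (e1(x := u)) \<subseteq> dom I" using Cons.prems(5) u by auto
      show "range (e2(x := u)) \<subseteq> dom I" using Cons.prems(6) u by auto
    qed
    have bd: "bdd_above ((\<lambda>u. evalf I (e2(x:=u)) (skol sk (Suc i) (zs @ [x]) \<sigma> qs A)) ` dom I)"
      using evalf_bounds[OF I V] range_upd[OF Cons.prems(6)] by (intro bdd_aboveI2[where M=1]) blast
    show ?thesis using q QEx
      by (simp) (rule cSUP_mono[OF ne bd], use step in blast)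
  next
    case QAll
    define \<sigma>' where "\<sigma>' = \<sigma>(x := Fn (sk i) (map Var zs))"
    define t where "t = fint I (sk i) (map e2 zs)"
    have "set (map e2 zs) \<subseteq> dom I" using Cons.prems(6) by auto
    then have t: "t \<in> dom I" using I unfolding t_def is_Vinterp_def by blast
    have xq: "x \<notin> snd ` set qs" using Cons.prems(1) q by simp
    have "evalf I (e1(x:=t)) (foldr qapp qs A) \<le> evalf I e2 (skol sk (Suc i) zs \<sigma>' qs A)"
    proof (rule Cons.IH)
      show "distinct (map snd qs)" using Cons.prems(1) by simp
      show "\<forall>v\<in>snd ` set qs. \<sigma>' v = Var v"
      proof
        fix v assume v: "v \<in> snd ` set qs"
        then have "v \<noteq> x" using xq by blast
        then have "\<sigma>' v = \<sigma> v" unfolding \<sigma>'_def by simp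
        then show "\<sigma>' v = Var v" using Cons.prems(2) v by simp
      qed
      show "\<forall>v. v \<notin> snd ` set qs \<longrightarrow> evalt I e2 (\<sigma>' v) = (e1(x := t)) v \<and> fvt (\<sigma>' v) \<inter> snd ` set qs = {}"
      proof (intro allI impI)
        fix v assume v: "v \<notin> snd ` set qs"
        show "evalt I e2 (\<sigma>' v) = (e1(x := t)) v \<and> fvt (\<sigma>' v) \<inter> snd ` set qs = {}"
        proof (cases "v = x")
          case True
          have "evalt I e2 (\<sigma>' v) = t" unfolding True \<sigma>'_def t_def by (simp add: comp_def)
          moreover have "fvt (\<sigma>' v) = set zs" unfolding True \<sigma>'_def by auto
          ultimately show ?thesis using Cons.prems(4) True by auto
        next
          case False
          then have "v \<notin> snd ` set (q # qs)" using v q by auto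
          then have h: "evalt I e2 (\<sigma> v) = e1 v" "fvt (\<sigma> v) \<inter> snd ` set (q#qs) = {}"
            using Cons.prems(3) by blast+
          have "\<sigma>' v = \<sigma> v" unfolding \<sigma>'_def using False by simp
          then show ?thesis using h False by auto
        qed
      qed
      show "set zs \<inter> snd ` set qs = {}" using Cons.prems(4) by auto
      show "range (e1(x := t)) \<subseteq> dom I" using Cons.prems(5) t by auto
      show "range e2 \<subseteq> dom I" by fact
    qed
    moreover have "(INF u\<in>dom I. evalf I (e1(x:=u)) (foldr qapp qs A)) \<le> evalf I (e1(x:=t)) (foldr qapp qs A)"
    proof (rule cINF_lower[OF bdd_belowI2[where m=0] t])
      fix u assume "u \<in> dom I"
      then show "0 \<le> evalf I (e1(x:=u)) (foldr qapp qs A)"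
        using evalf_bounds[OF I V] range_upd[OF Cons.prems(5)] by blast
    qed
    ultimately show ?thesis using q QAll unfolding \<sigma>'_def by simp
  qed
qed

definition upos :: "(quant \<times> nat) list \<Rightarrow> nat \<Rightarrow> nat \<Rightarrow> bool" where
  "upos qs i j \<longleftrightarrow> i \<le> j \<and> j - i < length qs \<and> fst (qs ! (j - i)) = QAll"

definition good :: "('u, 'f, 'p) intp \<Rightarrow> real set \<Rightarrow> 'f set \<Rightarrow> (nat \<Rightarrow> 'f) \<Rightarrow> (quant \<times> nat) list
   \<Rightarrow> nat \<Rightarrow> nat list \<Rightarrow> (nat \<Rightarrow> 'f trm) \<Rightarrow> (nat \<Rightarrow> 'u) \<Rightarrow> (nat \<Rightarrow> 'u) \<Rightarrow> (nat \<Rightarrow> 'u list \<Rightarrow> 'u)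
   \<Rightarrow> ('u, 'f, 'p) intp \<Rightarrow> bool" where
  "good I V K sk qs i zs \<sigma> e1 e2 F J \<longleftrightarrow> is_Vinterp V J \<and> dom J = dom I \<and> pint J = pint I
     \<and> (\<forall>f\<in>K. \<forall>us. set us \<subseteq> dom I \<longrightarrow> fint J f us = fint I f us)
     \<and> (\<forall>j. upos qs i j \<longrightarrow> (\<forall>us. set us \<subseteq> dom I \<longrightarrow> take (length zs) us = map e2 zs \<longrightarrow> fint J (sk j) us = F j us))
     \<and> (\<forall>v. v \<notin> snd ` set qs \<longrightarrow> evalt J e2 (\<sigma> v) = e1 v)"

lemma take_helper:
  assumes "take (Suc (length ys)) us = ys @ [u]"
  shows "length ys < length us" "take (length ys) us = ys" "us ! length ys = u"
proof -
  have "length (take (Suc (length ys)) us) = Suc (length ys)" using assms by simp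
  then show l: "length ys < length us" by simp
  have "take (length ys) us = take (length ys) (take (Suc (length ys)) us)" by simp
  then show "take (length ys) us = ys" using assms by simp
  have "us ! length ys = (take (Suc (length ys)) us) ! length ys" by simp
  then show "us ! length ys = u" using assms by simp
qed

lemma upos_Cons: "upos qs (Suc i) j \<Longrightarrow> upos (q # qs) i j \<and> j \<noteq> i"
  unfolding upos_def by (auto simp: nth_Cons' Suc_diff_Suc)

lemma L2:
  assumes I: "is_Vinterp V I" and V: "V \<subseteq> {0..1}" and qf: "qfree A" and K: "fsyms A \<subseteq> K"
  shows "distinct (map snd qs) \<Longrightarrow> (\<forall>v\<in>snd ` set qs. \<sigma> v = Var v)
   \<Longrightarrow> (\<forall>v. v \<notin> snd ` set qs \<longrightarrow> fvt (\<sigma> v) \<inter> snd ` set qs = {})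
   \<Longrightarrow> set zs \<inter> snd ` set qs = {} \<Longrightarrow> range e1 \<subseteq> dom I \<Longrightarrow> range e2 \<subseteq> dom I
   \<Longrightarrow> evalf I e1 (foldr qapp qs A) < d
   \<Longrightarrow> \<exists>F. (\<forall>j us. set us \<subseteq> dom I \<longrightarrow> F j us \<in> dom I) \<and>
        (\<forall>J. good I V K sk qs i zs \<sigma> e1 e2 F J \<longrightarrow> evalf J e2 (skol sk i zs \<sigma> qs A) < d)"
proof (induction qs arbitrary: i zs \<sigma> e1 e2 d)
  case Nil
  define F where "F = (\<lambda>(j::nat) us. fint I (sk j) us)"
  have "\<forall>j us. set us \<subseteq> dom I \<longrightarrow> F j us \<in> dom I" using I unfolding F_def is_Vinterp_def by blast
  moreover have "evalf J e2 (skol sk i zs \<sigma> [] A) < d" if J: "good I V K sk [] i zs \<sigma> e1 e2 F J" for J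
  proof -
    have "(\<lambda>v. evalt J e2 (\<sigma> v)) = e1" using J unfolding good_def by auto
    then have "evalf J e2 (skol sk i zs \<sigma> [] A) = evalf J e1 A" using evalf_subst[OF qf, of J e2 \<sigma>] by simp
    also have "\<dots> = evalf I e1 A"
      using J K Nil(5) unfolding good_def by (intro evalf_agree[OF I]) auto
    finally show ?thesis using Nil(7) by simp
  qed
  ultimately show ?case by blast
next
  case (Cons q qs)
  obtain k x where q: "q = (k, x)" by fastforce
  have ne: "dom I \<noteq> {}" using I unfolding is_Vinterp_def by simp
  have xq: "x \<notin> snd ` set qs" using Cons.prems(1) q by simp
  show ?case
  proof (cases k)
    case QEx
    define P where "P = foldr qapp qs A"
    define s where "s = (SUP u\<in>dom I. evalf I (e1(x:=u)) P)"
    have ba: "bdd_above ((\<lambda>u. evalf I (e1(x:=u)) P) ` dom I)"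
      using evalf_bounds[OF I V] range_upd[OF Cons.prems(5)] by (intro bdd_aboveI2[where M=1]) blast
    have sd: "s < d" using Cons.prems(7) q QEx unfolding P_def s_def by simp
    define d' where "d' = (s + d) / 2"
    have d'1: "s < d'" "d' < d" using sd unfolding d'_def by auto
    have xz: "x \<notin> set zs" using Cons.prems(4) q by auto
    let ?Q = "\<lambda>u F. (\<forall>j us. set us \<subseteq> dom I \<longrightarrow> F j us \<in> dom I) \<and>
        (\<forall>J. good I V K sk qs (Suc i) (zs @ [x]) \<sigma> (e1(x:=u)) (e2(x:=u)) F J \<longrightarrow>
            evalf J (e2(x:=u)) (skol sk (Suc i) (zs @ [x]) \<sigma> qs A) < d')"
    have ex: "\<exists>F. ?Q u F" if u: "u \<in> dom I" for u
    proof (rule Cons.IH)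
      show "distinct (map snd qs)" using Cons.prems(1) by simp
      show "\<forall>v\<in>snd ` set qs. \<sigma> v = Var v" using Cons.prems(2) by simp
      show "\<forall>v. v \<notin> snd ` set qs \<longrightarrow> fvt (\<sigma> v) \<inter> snd ` set qs = {}"
      proof (intro allI impI)
        fix v assume v: "v \<notin> snd ` set qs"
        show "fvt (\<sigma> v) \<inter> snd ` set qs = {}"
        proof (cases "v = x")
          case True
          then show ?thesis using Cons.prems(2) q xq by auto
        next
          case False
          then have "v \<notin> snd ` set (q # qs)" using v q by auto
          then show ?thesis using Cons.prems(3) by auto
        qed
      qed
      show "set (zs @ [x]) \<inter> snd ` set qs = {}" using Cons.prems(4) xq by auto
      show "range (e1(x := u)) \<subseteq> dom I" using Cons.prems(5) u by auto
      show "range (e2(x := u)) \<subseteq> dom I" using Cons.prems(6) u by auto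
      have "evalf I (e1(x:=u)) P \<le> s" unfolding s_def by (rule cSUP_upper[OF u ba])
      then show "evalf I (e1(x:=u)) (foldr qapp qs A) < d'" using d'1 P_def by simp
    qed
    define Fsel where "Fsel = (\<lambda>u. SOME F. ?Q u F)"
    have Fsel: "?Q u (Fsel u)" if "u \<in> dom I" for u
      unfolding Fsel_def by (rule someI_ex[OF ex[OF that]])
    obtain c where c: "c \<in> dom I" using ne by auto
    define n where "n = length zs"
    define idx where "idx = (\<lambda>us::'a list. if n < length us \<and> us ! n \<in> dom I then us ! n else c)"
    have idx: "idx us \<in> dom I" for us unfolding idx_def using c by auto
    define F' where "F' = (\<lambda>j us. Fsel (idx us) j us)"
    have "\<forall>j us. set us \<subseteq> dom I \<longrightarrow> F' j us \<in> dom I"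
      using Fsel[OF idx] unfolding F'_def by blast
    moreover have "evalf J e2 (skol sk i zs \<sigma> (q # qs) A) < d"
      if J: "good I V K sk (q # qs) i zs \<sigma> e1 e2 F' J" for J
    proof -
      have each: "evalf J (e2(x:=u)) (skol sk (Suc i) (zs @ [x]) \<sigma> qs A) < d'" if u: "u \<in> dom I" for u
      proof -
        have c1: "\<forall>j. upos qs (Suc i) j \<longrightarrow> (\<forall>us. set us \<subseteq> dom I \<longrightarrow>
            take (length (zs @ [x])) us = map (e2(x:=u)) (zs @ [x]) \<longrightarrow> fint J (sk j) us = Fsel u j us)"
        proof (intro allI impI)
          fix j us assume j: "upos qs (Suc i) j" and us: "set us \<subseteq> dom I"
            "take (length (zs @ [x])) us = map (e2(x:=u)) (zs @ [x])"
          have m: "map (e2(x:=u)) zs = map e2 zs" using xz by auto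
          have tk: "take (Suc (length (map e2 zs))) us = map e2 zs @ [u]" using us(2) m by simp
          note th = take_helper[OF tk]
          have "upos (q # qs) i j" using upos_Cons[OF j] by auto
          moreover have "take (length zs) us = map e2 zs" using th(2) by simp
          ultimately have "fint J (sk j) us = F' j us" using J us(1) unfolding good_def by blast
          moreover have "idx us = u" unfolding idx_def n_def using th(1,3) u by simp
          ultimately show "fint J (sk j) us = Fsel u j us" unfolding F'_def by simp
        qed
        have c2: "\<forall>v. v \<notin> snd ` set qs \<longrightarrow> evalt J (e2(x:=u)) (\<sigma> v) = (e1(x := u)) v"
        proof (intro allI impI)
          fix v assume v: "v \<notin> snd ` set qs"
          show "evalt J (e2(x:=u)) (\<sigma> v) = (e1(x := u)) v"
          proof (cases "v = x")
            case True
            then show ?thesis using Cons.prems(2) q by auto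
          next
            case False
            then have vq: "v \<notin> snd ` set (q # qs)" using v q by auto
            then have "evalt J e2 (\<sigma> v) = e1 v" using J unfolding good_def by blast
            moreover have "evalt J (e2(x:=u)) (\<sigma> v) = evalt J e2 (\<sigma> v)"
              using Cons.prems(3) vq q by (intro evalt_cong_fv) auto
            ultimately show ?thesis using False by simp
          qed
        qed
        have "good I V K sk qs (Suc i) (zs @ [x]) \<sigma> (e1(x:=u)) (e2(x:=u)) (Fsel u) J"
          using J c1 c2 unfolding good_def by blast
        then show ?thesis using Fsel[OF u] by blast
      qed
      have dJ: "dom J = dom I" using J unfolding good_def by simp
      have "evalf J e2 (skol sk i zs \<sigma> (q # qs) A) = (SUP u\<in>dom I. evalf J (e2(x:=u)) (skol sk (Suc i) (zs @ [x]) \<sigma> qs A))"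
        using q QEx dJ by simp
      also have "\<dots> \<le> d'" using each ne by (intro cSUP_least) (auto intro: less_imp_le)
      finally show ?thesis using d'1 by simp
    qed
    ultimately show ?thesis by blast
  next
    case QAll
    define P where "P = foldr qapp qs A"
    have bb: "bdd_below ((\<lambda>u. evalf I (e1(x:=u)) P) ` dom I)"
      using evalf_bounds[OF I V] range_upd[OF Cons.prems(5)] by (intro bdd_belowI2[where m=0]) blast
    have "(INF u\<in>dom I. evalf I (e1(x:=u)) P) < d" using Cons.prems(7) q QAll unfolding P_def by simp
    then obtain u where u: "u \<in> dom I" "evalf I (e1(x:=u)) P < d"
      using cINF_less_iff[OF ne bb] by blast
    define \<sigma>' where "\<sigma>' = \<sigma>(x := Fn (sk i) (map Var zs))"
    have "\<exists>F. (\<forall>j us. set us \<subseteq> dom I \<longrightarrow> F j us \<in> dom I) \<and>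
        (\<forall>J. good I V K sk qs (Suc i) zs \<sigma>' (e1(x:=u)) e2 F J \<longrightarrow> evalf J e2 (skol sk (Suc i) zs \<sigma>' qs A) < d)"
    proof (rule Cons.IH)
      show "distinct (map snd qs)" using Cons.prems(1) by simp
      show "\<forall>v\<in>snd ` set qs. \<sigma>' v = Var v"
      proof
        fix v assume v: "v \<in> snd ` set qs"
        then have "v \<noteq> x" using xq by blast
        then have "\<sigma>' v = \<sigma> v" unfolding \<sigma>'_def by simp
        then show "\<sigma>' v = Var v" using Cons.prems(2) v by simp
      qed
      show "\<forall>v. v \<notin> snd ` set qs \<longrightarrow> fvt (\<sigma>' v) \<inter> snd ` set qs = {}"
      proof (intro allI impI)
        fix v assume v: "v \<notin> snd ` set qs"
        show "fvt (\<sigma>' v) \<inter> snd ` set qs = {}"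
        proof (cases "v = x")
          case True
          have "fvt (\<sigma>' v) = set zs" unfolding True \<sigma>'_def by auto
          then show ?thesis using Cons.prems(4) by auto
        next
          case False
          then have "v \<notin> snd ` set (q # qs)" using v q by auto
          then have h: "fvt (\<sigma> v) \<inter> snd ` set (q#qs) = {}"
            using Cons.prems(3) by blast
          have "\<sigma>' v = \<sigma> v" unfolding \<sigma>'_def using False by simp
          then show ?thesis using h by auto
        qed
      qed
      show "set zs \<inter> snd ` set qs = {}" using Cons.prems(4) by auto
      show "range (e1(x := u)) \<subseteq> dom I" using Cons.prems(5) u by auto
      show "range e2 \<subseteq> dom I" by fact
      show "evalf I (e1(x:=u)) (foldr qapp qs A) < d" using u P_def by simp
    qed
    then obtain F where Fd: "\<forall>j us. set us \<subseteq> dom I \<longrightarrow> F j us \<in> dom I"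
      and FJ: "\<And>J. good I V K sk qs (Suc i) zs \<sigma>' (e1(x:=u)) e2 F J \<Longrightarrow> evalf J e2 (skol sk (Suc i) zs \<sigma>' qs A) < d"
      by blast
    define F' where "F' = F(i := (\<lambda>_. u))"
    have "\<forall>j us. set us \<subseteq> dom I \<longrightarrow> F' j us \<in> dom I" using Fd u unfolding F'_def by auto
    moreover have "evalf J e2 (skol sk i zs \<sigma> (q # qs) A) < d"
      if J: "good I V K sk (q # qs) i zs \<sigma> e1 e2 F' J" for J
    proof -
      have c1: "\<forall>j. upos qs (Suc i) j \<longrightarrow> (\<forall>us. set us \<subseteq> dom I \<longrightarrow> take (length zs) us = map e2 zs \<longrightarrow> fint J (sk j) us = F j us)"
      proof (intro allI impI)
        fix j us assume j: "upos qs (Suc i) j" and us: "set us \<subseteq> dom I" "take (length zs) us = map e2 zs"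
        have "upos (q # qs) i j" "j \<noteq> i" using upos_Cons[OF j] by auto
        then show "fint J (sk j) us = F j us" using J us unfolding good_def F'_def by auto
      qed
      have c2: "\<forall>v. v \<notin> snd ` set qs \<longrightarrow> evalt J e2 (\<sigma>' v) = (e1(x := u)) v"
      proof (intro allI impI)
        fix v assume v: "v \<notin> snd ` set qs"
        show "evalt J e2 (\<sigma>' v) = (e1(x := u)) v"
        proof (cases "v = x")
          case True
          have "upos (q # qs) i i" unfolding upos_def using q QAll by simp
          moreover have "set (map e2 zs) \<subseteq> dom I" using Cons.prems(6) by auto
          ultimately have "fint J (sk i) (map e2 zs) = F' i (map e2 zs)"
            using J unfolding good_def by auto
          then have "fint J (sk i) (map e2 zs) = u" unfolding F'_def by simp
          then show ?thesis unfolding True \<sigma>'_def by (simp add: comp_def)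
        next
          case False
          then have "v \<notin> snd ` set (q # qs)" using v q by auto
          then have "evalt J e2 (\<sigma> v) = e1 v" using J unfolding good_def by blast
          moreover have "\<sigma>' v = \<sigma> v" unfolding \<sigma>'_def using False by simp
          ultimately show ?thesis using False by simp
        qed
      qed
      have "good I V K sk qs (Suc i) zs \<sigma>' (e1(x:=u)) e2 F J"
        using J c1 c2 unfolding good_def by blast
      then have "evalf J e2 (skol sk (Suc i) zs \<sigma>' qs A) < d" by (rule FJ)
      then show ?thesis using q QAll unfolding \<sigma>'_def by simp
    qed
    ultimately show ?thesis by blast
  qed
qed

theorem lemma4p1:
  fixes V :: "real set"
    and qs :: "(quant \<times> nat) list"
    and A :: "('f, 'p) fm"
    and \<Gamma> :: "('f, 'p) fm set"
    and sk :: "nat \<Rightarrow> 'f"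
  assumes "goedel_set V"
    and "qfree A"
    and "distinct (map snd qs)"
    and "sentence (prenex qs A)"
    and "\<forall>B\<in>\<Gamma>. sentence B"
    and "inj_on sk (univ_pos qs)"
    and "skolem_syms sk qs \<inter> fsyms A = {}"
    and "\<forall>B\<in>\<Gamma>. skolem_syms sk qs \<inter> fsyms B = {}"
  shows "entails TYPE('u) V \<Gamma> (prenex qs A) \<longleftrightarrow> entails TYPE('u) V \<Gamma> (skolemize sk qs A)"
proof
  have V: "V \<subseteq> {0..1}" using assms(1) unfolding goedel_set_def by simp
  {
    assume H: "entails TYPE('u) V \<Gamma> (prenex qs A)"
    show "entails TYPE('u) V \<Gamma> (skolemize sk qs A)"
      unfolding entails_def
    proof (intro allI impI)
      fix I :: "('u, 'f, 'p) intp"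
      assume IG: "is_Vinterp V I \<and> (\<forall>B\<in>\<Gamma>. holds I B)"
      then have I: "is_Vinterp V I" by simp
      have hp: "holds I (prenex qs A)" using H IG unfolding entails_def by blast
      show "holds I (skolemize sk qs A)"
        unfolding holds_def
      proof (intro allI impI)
        fix e :: "nat \<Rightarrow> 'u" assume e: "range e \<subseteq> dom I"
        have "evalf I e (foldr qapp qs A) \<le> evalf I e (skol sk 0 [] Var qs A)"
          using assms(3) e by (intro L1[OF I V assms(2)]) auto
        moreover have "evalf I e (foldr qapp qs A) = 1" using hp e unfolding holds_def prenex_def by blast
        moreover have "evalf I e (skol sk 0 [] Var qs A) \<le> 1" using evalf_bounds[OF I V e] by blast
        ultimately show "evalf I e (skolemize sk qs A) = 1" unfolding skolemize_def by simp
      qed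
    qed
  }
  {
    assume H: "entails TYPE('u) V \<Gamma> (skolemize sk qs A)"
    show "entails TYPE('u) V \<Gamma> (prenex qs A)"
      unfolding entails_def
    proof (intro allI impI)
      fix I :: "('u, 'f, 'p) intp"
      assume IG: "is_Vinterp V I \<and> (\<forall>B\<in>\<Gamma>. holds I B)"
      then have I: "is_Vinterp V I" by simp
      show "holds I (prenex qs A)"
        unfolding holds_def
      proof (intro allI impI)
        fix e :: "nat \<Rightarrow> 'u" assume e: "range e \<subseteq> dom I"
        show "evalf I e (prenex qs A) = 1"
        proof (rule ccontr)
          assume ne1: "evalf I e (prenex qs A) \<noteq> 1"
          have "evalf I e (foldr qapp qs A) < 1"
            using ne1 evalf_bounds[OF I V e, of "prenex qs A"] unfolding prenex_def by auto
          then obtain F where Fd: "\<forall>j us. set us \<subseteq> dom I \<longrightarrow> F j us \<in> dom I"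
            and FJ: "\<And>J. good I V (fsyms A) sk qs 0 [] Var e e F J \<Longrightarrow> evalf J e (skol sk 0 [] Var qs A) < 1"
            using L2[OF I V assms(2) order_refl, of qs Var "[]" e e 1 sk 0] assms(3) e by auto
          define U where "U = univ_pos qs"
          define I' where "I' = I\<lparr>fint := (\<lambda>f us. if f \<in> sk ` U \<and> set us \<subseteq> dom I then F (inv_into U sk f) us else fint I f us)\<rparr>"
          have I'd: "dom I' = dom I" "pint I' = pint I" unfolding I'_def by simp_all
          have I'V: "is_Vinterp V I'"
            using I Fd unfolding is_Vinterp_def I'_def by auto
          have agree: "fint I' f us = fint I f us" if "f \<notin> sk ` U" for f us
            using that unfolding I'_def by simp
          have "\<forall>B\<in>\<Gamma>. holds I' B"
          proof
            fix B assume B: "B \<in> \<Gamma>"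
            show "holds I' B" unfolding holds_def
            proof (intro allI impI)
              fix e' :: "nat \<Rightarrow> 'u" assume e': "range e' \<subseteq> dom I'"
              have nB: "\<forall>f\<in>fsyms B. f \<notin> sk ` U"
                using assms(8) B unfolding skolem_syms_def U_def by blast
              have "evalf I' e' B = evalf I e' B"
                using e' I'd agree nB by (intro evalf_agree[OF I]) auto
              also have "\<dots> = 1" using IG B e' I'd unfolding holds_def by auto
              finally show "evalf I' e' B = 1" .
            qed
          qed
          then have "holds I' (skolemize sk qs A)" using H I'V unfolding entails_def by blast
          then have one: "evalf I' e (skol sk 0 [] Var qs A) = 1"
            using e I'd unfolding holds_def skolemize_def by auto
          have "good I V (fsyms A) sk qs 0 [] Var e e F I'"
            unfolding good_def
          proof (intro conjI)
            show "\<forall>f\<in>fsyms A. \<forall>us. set us \<subseteq> dom I \<longrightarrow> fint I' f us = fint I f us"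
              using agree assms(7) unfolding skolem_syms_def U_def by blast
            show "\<forall>j. upos qs 0 j \<longrightarrow> (\<forall>us. set us \<subseteq> dom I \<longrightarrow> take (length []) us = map e [] \<longrightarrow> fint I' (sk j) us = F j us)"
            proof (intro allI impI)
              fix j us assume j: "upos qs 0 j" and us: "set us \<subseteq> dom I"
              have jU: "j \<in> U" using j unfolding upos_def U_def univ_pos_def by simp
              then have "inv_into U sk (sk j) = j" using assms(6) unfolding U_def by (simp add: inv_into_f_f)
              then show "fint I' (sk j) us = F j us" using jU us unfolding I'_def by simp
            qed
          qed (use I'V I'd in auto)
          then have "evalf I' e (skol sk 0 [] Var qs A) < 1" by (rule FJ)
          then show False using one by simp
        qed
      qed
    qed
  }
qed

end
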